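(* Let $\mathbb{K}$ be a field, $R=\mathbb{K}\langle x,y\rangle/(xy-1)$, and let $I=\langle 1-yx\rangle$ be the socle of $R$. Let $H=\Sigma\oplus Rp(x)$ be a left ideal of $R$, where $p(x)\in\mathbb{K}[x]$ and $\Sigma\subseteq I$ is a left ideal. If $p(x)\neq 0$, then $H$ is finitely generated as a left $R$-module and $\Sigma$ has finite length. In particular, every left ideal of $R$ is either semisimple or finitely generated.
   Context: $R$ has $\mathbb{K}$-basis $\{y^ix^j: i,j\ge 0\}$; $I=\bigoplus_{n\ge1}Rf_n$ with $f_n=y^{n-1}x^{n-1}-y^nx^n$, each $Rf_n$ a simple left module isomorphic to $Rf_1$. *)

theory Defs
  imports "HOL-Library.Poly_Mapping" "HOL-Computational_Algebra.Polynomial"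
begin

text \<open>The Jacobson algebra R = K<x,y>/(xy - 1), modelled by its normal-form basis
  y^i x^j (i,j >= 0): an element is a finitely supported K-valued function on pairs (i,j),
  the pair (i,j) standing for the monomial y^i x^j.\<close>

type_synonym 'k jac = "(nat \<times> nat) \<Rightarrow>\<^sub>0 'k"

text \<open>Product of basis monomials: (y^i x^j)(y^k x^l) = y^(i + (k-j)) x^(l + (j-k))
  (truncated subtraction), which is forced by xy = 1.\<close>
definition jmono :: "nat \<times> nat \<Rightarrow> nat \<times> nat \<Rightarrow> nat \<times> nat" where
  "jmono u v = (fst u + (fst v - snd u), snd v + (snd u - fst v))"

definition jmul :: "'k::field jac \<Rightarrow> 'k jac \<Rightarrow> 'k jac" where
  "jmul a b = (\<Sum>u\<in>Poly_Mapping.keys a. \<Sum>v\<in>Poly_Mapping.keys b.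
      Poly_Mapping.single (jmono u v) (Poly_Mapping.lookup a u * Poly_Mapping.lookup b v))"

definition jone :: "'k::field jac" where "jone = Poly_Mapping.single (0,0) 1"
definition jx :: "'k::field jac" where "jx = Poly_Mapping.single (0,1) 1"
definition jy :: "'k::field jac" where "jy = Poly_Mapping.single (1,0) 1"

definition jpoly :: "'k::field poly \<Rightarrow> 'k jac" where
  "jpoly p = (\<Sum>i\<le>degree p. Poly_Mapping.single (0,i) (coeff p i))"

definition left_ideal :: "'k::field jac set \<Rightarrow> bool" where
  "left_ideal L \<longleftrightarrow> 0 \<in> L \<and> (\<forall>a\<in>L. \<forall>b\<in>L. a + b \<in> L) \<and> (\<forall>r :: 'k jac. \<forall>a\<in>L. jmul r a \<in> L)"

definition two_sided_ideal :: "'k::field jac set \<Rightarrow> bool" where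
  "two_sided_ideal L \<longleftrightarrow> left_ideal L \<and> (\<forall>r :: 'k jac. \<forall>a\<in>L. jmul a r \<in> L)"

definition jI :: "'k::field jac set" where
  "jI = \<Inter>{L. two_sided_ideal L \<and> jone - jmul jy jx \<in> L}"

definition lprinc :: "'k::field jac \<Rightarrow> 'k jac set" where
  "lprinc a = {jmul r a | r :: 'k jac. True}"

definition lspan :: "'k::field jac set \<Rightarrow> 'k jac set" where
  "lspan G = {\<Sum>g\<in>F. jmul (c g) g | (F :: 'k jac set) (c :: 'k jac \<Rightarrow> 'k jac). finite F \<and> F \<subseteq> G}"

definition fin_gen :: "'k::field jac set \<Rightarrow> bool" where
  "fin_gen L \<longleftrightarrow> (\<exists>G :: 'k jac set. finite G \<and> G \<subseteq> L \<and> L = lspan G)"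

definition simple_li :: "'k::field jac set \<Rightarrow> bool" where
  "simple_li S \<longleftrightarrow> left_ideal S \<and> S \<noteq> {0} \<and>
     (\<forall>L :: 'k jac set. left_ideal L \<longrightarrow> L \<subseteq> S \<longrightarrow> L = {0} \<or> L = S)"

definition semisimple_li :: "'k::field jac set \<Rightarrow> bool" where
  "semisimple_li L \<longleftrightarrow> left_ideal L \<and>
     (\<forall>a\<in>L. \<exists>(n::nat) (f :: nat \<Rightarrow> 'k jac) (S :: nat \<Rightarrow> 'k jac set). (\<forall>i<n. simple_li (S i) \<and> S i \<subseteq> L \<and> f i \<in> S i) \<and> a = (\<Sum>i<n. f i))"

definition finite_length :: "'k::field jac set \<Rightarrow> bool" where
  "finite_length L \<longleftrightarrow> (\<exists>(n::nat) (M :: nat \<Rightarrow> 'k jac set). M 0 = {0} \<and> M n = L \<and> (\<forall>i\<le>n. left_ideal (M i)) \<and>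
     (\<forall>i<n. M i \<subset> M (Suc i) \<and>
        (\<forall>N :: 'k jac set. left_ideal N \<longrightarrow> M i \<subseteq> N \<longrightarrow> N \<subseteq> M (Suc i) \<longrightarrow> N = M i \<or> N = M (Suc i))))"

end

theory Submission
  imports Defs
begin


lemma jmono_assoc: "jmono (jmono u v) w = jmono u (jmono v w)"
  unfolding jmono_def by (cases u; cases v; cases w) auto

lemma pm_expand: "(a::'a \<Rightarrow>\<^sub>0 'b::comm_monoid_add) = (\<Sum>u\<in>Poly_Mapping.keys a. Poly_Mapping.single u (Poly_Mapping.lookup a u))"
proof (rule poly_mapping_eqI)
  fix k
  show "Poly_Mapping.lookup a k = Poly_Mapping.lookup (\<Sum>u\<in>Poly_Mapping.keys a. Poly_Mapping.single u (Poly_Mapping.lookup a u)) k"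
    by (cases "k \<in> Poly_Mapping.keys a")
       (auto simp: lookup_sum lookup_single when_def in_keys_iff sum.delta)
qed

lemma jmul_superset:
  assumes "finite A" "Poly_Mapping.keys a \<subseteq> A" "finite B" "Poly_Mapping.keys b \<subseteq> B"
  shows "jmul a b = (\<Sum>u\<in>A. \<Sum>v\<in>B. Poly_Mapping.single (jmono u v) (Poly_Mapping.lookup a u * Poly_Mapping.lookup b v))"
proof -
  have "jmul a b = (\<Sum>u\<in>Poly_Mapping.keys a. \<Sum>v\<in>B. Poly_Mapping.single (jmono u v) (Poly_Mapping.lookup a u * Poly_Mapping.lookup b v))"
    unfolding jmul_def
    by (rule sum.cong[OF refl], rule sum.mono_neutral_left) (use assms in \<open>auto simp: in_keys_iff\<close>)
  also have "\<dots> = (\<Sum>u\<in>A. \<Sum>v\<in>B. Poly_Mapping.single (jmono u v) (Poly_Mapping.lookup a u * Poly_Mapping.lookup b v))"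
    by (rule sum.mono_neutral_left) (use assms in \<open>auto simp: in_keys_iff\<close>)
  finally show ?thesis .
qed

lemma jmul_add_left: "jmul (a + b) c = jmul a c + jmul b c"
proof -
  let ?A = "Poly_Mapping.keys a \<union> Poly_Mapping.keys b"
  have f: "finite ?A" by simp
  have "jmul (a+b) c = (\<Sum>u\<in>?A. \<Sum>v\<in>Poly_Mapping.keys c. Poly_Mapping.single (jmono u v) (Poly_Mapping.lookup (a+b) u * Poly_Mapping.lookup c v))"
    by (rule jmul_superset) (use keys_add[of a b] in auto)
  also have "\<dots> = (\<Sum>u\<in>?A. \<Sum>v\<in>Poly_Mapping.keys c. Poly_Mapping.single (jmono u v) (Poly_Mapping.lookup a u * Poly_Mapping.lookup c v))
     + (\<Sum>u\<in>?A. \<Sum>v\<in>Poly_Mapping.keys c. Poly_Mapping.single (jmono u v) (Poly_Mapping.lookup b u * Poly_Mapping.lookup c v))"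
    by (simp add: lookup_add distrib_right single_add sum.distrib)
  also have "\<dots> = jmul a c + jmul b c"
    by (subst (1 2) jmul_superset[where A="?A" and B="Poly_Mapping.keys c"]) auto
  finally show ?thesis .
qed

lemma jmul_add_right: "jmul a (b + c) = jmul a b + jmul a c"
proof -
  let ?B = "Poly_Mapping.keys b \<union> Poly_Mapping.keys c"
  have "jmul a (b+c) = (\<Sum>u\<in>Poly_Mapping.keys a. \<Sum>v\<in>?B. Poly_Mapping.single (jmono u v) (Poly_Mapping.lookup a u * Poly_Mapping.lookup (b+c) v))"
    by (rule jmul_superset) (use keys_add[of b c] in auto)
  also have "\<dots> = (\<Sum>u\<in>Poly_Mapping.keys a. \<Sum>v\<in>?B. Poly_Mapping.single (jmono u v) (Poly_Mapping.lookup a u * Poly_Mapping.lookup b v))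
     + (\<Sum>u\<in>Poly_Mapping.keys a. \<Sum>v\<in>?B. Poly_Mapping.single (jmono u v) (Poly_Mapping.lookup a u * Poly_Mapping.lookup c v))"
    by (simp add: lookup_add distrib_left single_add sum.distrib)
  also have "\<dots> = jmul a b + jmul a c"
    by (subst (1 2) jmul_superset[where A="Poly_Mapping.keys a" and B="?B"]) auto
  finally show ?thesis .
qed

lemma jmul_zero_left[simp]: "jmul 0 b = 0" by (simp add: jmul_def)
lemma jmul_zero_right[simp]: "jmul a 0 = 0" by (simp add: jmul_def)

lemma jmul_uminus_left: "jmul (- a) b = - jmul a b"
  using jmul_add_left[of a "-a" b] minus_unique[of "jmul a b" "jmul (-a) b"] by simp
lemma jmul_uminus_right: "jmul a (- b) = - jmul a b"
  using jmul_add_right[of a b "-b"] minus_unique[of "jmul a b" "jmul a (-b)"] by simp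
lemma jmul_diff_left: "jmul (a - b) c = jmul a c - jmul b c"
  using jmul_add_left[of a "-b" c] by (simp add: jmul_uminus_left)
lemma jmul_diff_right: "jmul a (b - c) = jmul a b - jmul a c"
  using jmul_add_right[of a b "-c"] by (simp add: jmul_uminus_right)

lemma jmul_sum_left: "jmul (\<Sum>i\<in>I. f i) b = (\<Sum>i\<in>I. jmul (f i) b)"
  by (induction I rule: infinite_finite_induct) (auto simp: jmul_add_left)
lemma jmul_sum_right: "jmul a (\<Sum>i\<in>I. f i) = (\<Sum>i\<in>I. jmul a (f i))"
  by (induction I rule: infinite_finite_induct) (auto simp: jmul_add_right)

lemma jmul_single_single: "jmul (Poly_Mapping.single u c) (Poly_Mapping.single v d) = Poly_Mapping.single (jmono u v) (c * d)"
  by (subst jmul_superset[where A="{u}" and B="{v}"]) auto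

lemma jmul_single_left: "jmul (Poly_Mapping.single u c) b = (\<Sum>v\<in>Poly_Mapping.keys b. Poly_Mapping.single (jmono u v) (c * Poly_Mapping.lookup b v))"
  by (subst jmul_superset[where A="{u}" and B="Poly_Mapping.keys b"]) auto
lemma jmul_single_right: "jmul a (Poly_Mapping.single v c) = (\<Sum>u\<in>Poly_Mapping.keys a. Poly_Mapping.single (jmono u v) (Poly_Mapping.lookup a u * c))"
  by (subst jmul_superset[where A="Poly_Mapping.keys a" and B="{v}"]) auto

lemma jmul_assoc: "jmul (jmul a b) c = jmul a (jmul (b::'k::field jac) c)"
proof -
  let ?s = "\<lambda>(x::'k jac) u. Poly_Mapping.single u (Poly_Mapping.lookup x u)"
  have "jmul (jmul a b) c = jmul (jmul (\<Sum>u\<in>Poly_Mapping.keys a. ?s a u) (\<Sum>u\<in>Poly_Mapping.keys b. ?s b u)) (\<Sum>u\<in>Poly_Mapping.keys c. ?s c u)"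
    by (simp only: pm_expand[symmetric])
  also have "\<dots> = (\<Sum>u\<in>Poly_Mapping.keys a. \<Sum>v\<in>Poly_Mapping.keys b. \<Sum>w\<in>Poly_Mapping.keys c. jmul (jmul (?s a u) (?s b v)) (?s c w))"
    by (simp only: jmul_sum_left jmul_sum_right sum.swap[where A="Poly_Mapping.keys c"] sum.swap[where A="Poly_Mapping.keys b" and B="Poly_Mapping.keys a"])
  also have "\<dots> = (\<Sum>u\<in>Poly_Mapping.keys a. \<Sum>v\<in>Poly_Mapping.keys b. \<Sum>w\<in>Poly_Mapping.keys c. jmul (?s a u) (jmul (?s b v) (?s c w)))"
    by (simp add: jmul_single_single jmono_assoc mult.assoc)
  also have "\<dots> = jmul (\<Sum>u\<in>Poly_Mapping.keys a. ?s a u) (jmul (\<Sum>u\<in>Poly_Mapping.keys b. ?s b u) (\<Sum>u\<in>Poly_Mapping.keys c. ?s c u))"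
    by (simp only: jmul_sum_left jmul_sum_right sum.swap[where A="Poly_Mapping.keys c"] sum.swap[where A="Poly_Mapping.keys b" and B="Poly_Mapping.keys a"])
  finally show ?thesis by (simp only: pm_expand[symmetric])
qed

lemma jmul_one_left[simp]: "jmul jone a = a"
proof -
  have "jmul jone a = (\<Sum>v\<in>Poly_Mapping.keys a. Poly_Mapping.single v (Poly_Mapping.lookup a v))"
    unfolding jone_def jmul_single_left by (simp add: jmono_def)
  then show ?thesis using pm_expand[of a] by simp
qed
lemma jmul_one_right[simp]: "jmul a jone = a"
proof -
  have "jmul a jone = (\<Sum>v\<in>Poly_Mapping.keys a. Poly_Mapping.single v (Poly_Mapping.lookup a v))"
    unfolding jone_def jmul_single_right by (simp add: jmono_def)
  then show ?thesis using pm_expand[of a] by simp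
qed



abbreviation (input) lk where "lk \<equiv> Poly_Mapping.lookup"
abbreviation (input) ks where "ks \<equiv> Poly_Mapping.keys"
abbreviation (input) sg where "sg \<equiv> Poly_Mapping.single"

definition mm :: "nat \<Rightarrow> nat \<Rightarrow> 'k::field jac" where "mm i j = sg (i,j) 1"
definition sc :: "'k::field \<Rightarrow> 'k jac \<Rightarrow> 'k jac" where "sc c a = jmul (sg (0,0) c) a"
definition e00 :: "'k::field jac" where "e00 = sg (0,0) 1 - sg (1,1) 1"
definition dg :: "nat \<times> nat \<Rightarrow> int" where "dg u = int (snd u) - int (fst u)"
definition dsum :: "int \<Rightarrow> 'k::field jac \<Rightarrow> 'k" where
  "dsum d a = (\<Sum>u\<in>ks a. if dg u = d then lk a u else 0)"
definition JJ :: "'k::field jac set" where "JJ = {a. \<forall>d. dsum d a = 0}"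

lemma lookup_jmul_single_left:
  "lk (jmul (sg u c) b) w = c * (\<Sum>v\<in>ks b. if jmono u v = w then lk b v else 0)"
  unfolding jmul_single_left lookup_sum lookup_single sum_distrib_left
  by (rule sum.cong) (auto simp: when_def)

lemma lookup_jmul_single_right:
  "lk (jmul b (sg u c)) w = (\<Sum>v\<in>ks b. if jmono v u = w then lk b v else 0) * c"
  unfolding jmul_single_right lookup_sum lookup_single sum_distrib_right
  by (rule sum.cong) (auto simp: when_def)

lemma keys_jmul_single_left: "ks (jmul (sg u c) b) \<subseteq> jmono u ` ks b"
proof
  fix w assume "w \<in> ks (jmul (sg u c) b)"
  then have "lk (jmul (sg u c) b) w \<noteq> 0" by (simp add: in_keys_iff)
  then have "(\<Sum>v\<in>ks b. if jmono u v = w then lk b v else 0) \<noteq> 0"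
    by (simp add: lookup_jmul_single_left)
  then obtain v where "v \<in> ks b" "(if jmono u v = w then lk b v else 0) \<noteq> 0"
    using sum.not_neutral_contains_not_neutral by blast
  then show "w \<in> jmono u ` ks b" by (auto split: if_splits)
qed

lemma sum_if_eq_lookup: "(\<Sum>v\<in>ks b. if v = w then lk b v else 0) = lk b w"
  by (cases "w \<in> ks b") (auto simp: sum.delta in_keys_iff)

lemma lookup_sc[simp]: "lk (sc c a) w = c * lk a w"
  unfolding sc_def lookup_jmul_single_left by (simp add: jmono_def sum_if_eq_lookup)

lemma jmul_single00_right: "jmul a (sg (0,0) c) = sc c a"
  by (rule poly_mapping_eqI) (simp add: lookup_jmul_single_right jmono_def sum_if_eq_lookup)

lemma sc_jmul_left: "jmul (sc c a) b = sc c (jmul a b)"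
  unfolding sc_def by (simp add: jmul_assoc)
lemma sc_jmul_right: "jmul a (sc c b) = sc c (jmul a b)"
proof -
  have "jmul a (sc c b) = jmul (jmul a (sg (0,0) c)) b" unfolding sc_def by (simp add: jmul_assoc)
  also have "\<dots> = sc c (jmul a b)" by (simp add: jmul_single00_right sc_jmul_left)
  finally show ?thesis .
qed
lemma sc_0_right[simp]: "sc c 0 = 0" by (simp add: sc_def)
lemma sc_one[simp]: "sc 1 a = a" by (rule poly_mapping_eqI) simp
lemma sc_zero[simp]: "sc 0 a = 0" by (rule poly_mapping_eqI) simp
lemma sc_sc[simp]: "sc c (sc d a) = sc (c*d) a" by (rule poly_mapping_eqI) simp
lemma sc_add: "sc c (a + b) = sc c a + sc c b" by (rule poly_mapping_eqI) (simp add: lookup_add distrib_left)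
lemma sc_eq0: "sc c a = 0 \<Longrightarrow> c \<noteq> 0 \<Longrightarrow> a = 0"
proof -
  assume "sc c a = 0" "c \<noteq> 0"
  then have "sc (inverse c) (sc c a) = 0" by simp
  with \<open>c \<noteq> 0\<close> show ?thesis by simp
qed

lemma mm_mm: "jmul (mm i j) (mm k l) = mm (i + (k - j)) (l + (j - k))"
  unfolding mm_def by (simp add: jmul_single_single jmono_def)

lemma dg_jmono: "dg (jmono u v) = dg u + dg v"
  unfolding dg_def jmono_def by (cases u; cases v) auto

lemma dsum_superset: "finite A \<Longrightarrow> ks a \<subseteq> A \<Longrightarrow> dsum d a = (\<Sum>u\<in>A. if dg u = d then lk a u else 0)"
  unfolding dsum_def by (rule sum.mono_neutral_left) (auto simp: in_keys_iff)

lemma dsum_add: "dsum d (a + b) = dsum d a + dsum d b"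
proof -
  let ?A = "ks a \<union> ks b \<union> ks (a+b)"
  have f: "finite ?A" by simp
  have "dsum d (a+b) = (\<Sum>u\<in>?A. if dg u = d then lk (a+b) u else 0)" by (rule dsum_superset) auto
  moreover have "dsum d a = (\<Sum>u\<in>?A. if dg u = d then lk a u else 0)" by (rule dsum_superset) auto
  moreover have "dsum d b = (\<Sum>u\<in>?A. if dg u = d then lk b u else 0)" by (rule dsum_superset) auto
  moreover have "(\<Sum>u\<in>?A. if dg u = d then lk (a+b) u else 0) = (\<Sum>u\<in>?A. if dg u = d then lk a u else 0) + (\<Sum>u\<in>?A. if dg u = d then lk b u else 0)"
    unfolding sum.distrib[symmetric] by (rule sum.cong) (auto simp: lookup_add)
  ultimately show ?thesis by simp
qed
lemma dsum_zero[simp]: "dsum d 0 = 0" by (simp add: dsum_def)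
lemma dsum_uminus: "dsum d (- a) = - dsum d a" by (simp add: dsum_def sum_negf[symmetric] if_distrib cong: if_cong)
lemma dsum_diff: "dsum d (a - b) = dsum d a - dsum d b"
  using dsum_add[of d a "-b"] by (simp add: dsum_uminus)
lemma dsum_sum: "dsum d (\<Sum>i\<in>I. f i) = (\<Sum>i\<in>I. dsum d (f i))"
  by (induction I rule: infinite_finite_induct) (auto simp: dsum_add)
lemma dsum_single: "dsum d (sg w c) = (if dg w = d then c else 0)"
  by (simp add: dsum_def)
lemma dsum_sc: "dsum d (sc c a) = c * dsum d a"
proof -
  have "ks (sc c a) \<subseteq> ks a" by (auto simp: in_keys_iff)
  then have "dsum d (sc c a) = (\<Sum>u\<in>ks a. if dg u = d then lk (sc c a) u else 0)"
    by (intro dsum_superset) auto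
  also have "\<dots> = c * dsum d a" unfolding dsum_def sum_distrib_left by (rule sum.cong) auto
  finally show ?thesis .
qed

lemma dsum_jmul_single_left: "dsum d (jmul (sg u c) b) = c * dsum (d - dg u) b"
proof -
  have "dsum d (jmul (sg u c) b) = (\<Sum>v\<in>ks b. if dg u + dg v = d then c * lk b v else 0)"
    by (simp add: jmul_single_left dsum_sum dsum_single dg_jmono)
  also have "\<dots> = c * dsum (d - dg u) b"
    unfolding dsum_def sum_distrib_left by (rule sum.cong) auto
  finally show ?thesis .
qed
lemma dsum_jmul_single_right: "dsum d (jmul b (sg u c)) = dsum (d - dg u) b * c"
proof -
  have "dsum d (jmul b (sg u c)) = (\<Sum>v\<in>ks b. if dg v + dg u = d then lk b v * c else 0)"
    by (simp add: jmul_single_right dsum_sum dsum_single dg_jmono)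
  also have "\<dots> = dsum (d - dg u) b * c"
    unfolding dsum_def sum_distrib_right by (rule sum.cong) auto
  finally show ?thesis .
qed

lemma JJ_jmul_left: "a \<in> JJ \<Longrightarrow> jmul r a \<in> JJ"
proof -
  assume a: "a \<in> JJ"
  have "jmul r a = (\<Sum>u\<in>ks r. jmul (sg u (lk r u)) a)"
    by (subst pm_expand[of r]) (simp add: jmul_sum_left)
  then show ?thesis using a by (simp add: JJ_def dsum_sum dsum_jmul_single_left)
qed
lemma JJ_jmul_right: "a \<in> JJ \<Longrightarrow> jmul a r \<in> JJ"
proof -
  assume a: "a \<in> JJ"
  have "jmul a r = (\<Sum>u\<in>ks r. jmul a (sg u (lk r u)))"
    by (subst pm_expand[of r]) (simp add: jmul_sum_right)
  then show ?thesis using a by (simp add: JJ_def dsum_sum dsum_jmul_single_right)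
qed
lemma JJ_add: "a \<in> JJ \<Longrightarrow> b \<in> JJ \<Longrightarrow> a + b \<in> JJ" by (simp add: JJ_def dsum_add)
lemma JJ_diff: "a \<in> JJ \<Longrightarrow> b \<in> JJ \<Longrightarrow> a - b \<in> JJ" by (simp add: JJ_def dsum_diff)
lemma JJ_zero: "0 \<in> JJ" by (simp add: JJ_def)

lemma e00_JJ: "(e00::'k::field jac) \<in> JJ"
  by (simp add: JJ_def e00_def dsum_diff dsum_single dg_def)

lemma e00_eq: "jone - jmul jy jx = (e00::'k::field jac)"
  by (simp add: jone_def jy_def jx_def e00_def jmul_single_single jmono_def)

lemma jI_sub_JJ: "(jI :: 'k::field jac set) \<subseteq> JJ"
proof -
  have "two_sided_ideal (JJ::'k jac set)"
    by (auto simp: two_sided_ideal_def left_ideal_def JJ_zero JJ_add JJ_jmul_left JJ_jmul_right)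
  moreover have "jone - jmul jy jx \<in> (JJ::'k jac set)" by (simp add: e00_eq e00_JJ)
  ultimately show ?thesis unfolding jI_def by blast
qed



lemma e00_mm: "(e00::'k::field jac) = mm 0 0 - mm 1 1" by (simp add: e00_def mm_def)
lemma mm00: "mm 0 0 = jone" by (simp add: mm_def jone_def)

lemma e00_single_pos: "fst u \<ge> 1 \<Longrightarrow> jmul e00 (sg u c) = (0::'k::field jac)"
  by (cases u) (simp add: e00_def jmul_diff_left jmul_single_single jmono_def)

lemma single_e00_pos: "snd u \<ge> 1 \<Longrightarrow> jmul (sg u c) e00 = (0::'k::field jac)"
  by (cases u) (simp add: e00_def jmul_diff_right jmul_single_single jmono_def)

lemma e00_e00: "jmul e00 e00 = (e00::'k::field jac)"
  by (simp add: e00_def jmul_diff_right jmul_diff_left jmul_single_single jmono_def)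

lemma e00_row0_zero:
  assumes "\<forall>j. lk c (0,j) = 0" shows "jmul e00 c = (0::'k::field jac)"
proof -
  have "jmul e00 c = (\<Sum>u\<in>ks c. jmul e00 (sg u (lk c u)))"
    by (subst pm_expand[of c]) (simp add: jmul_sum_right)
  also have "\<dots> = 0"
  proof (rule sum.neutral, rule ballI)
    fix u assume "u \<in> ks c"
    have "fst u \<noteq> 0"
    proof
      assume "fst u = 0"
      then have "u = (0, snd u)" by (cases u) auto
      then show False using \<open>u \<in> ks c\<close> assms by (metis in_keys_iff)
    qed
    then have "fst u \<ge> 1" by simp
    then show "jmul e00 (sg u (lk c u)) = 0" by (rule e00_single_pos)
  qed
  finally show ?thesis .
qed

lemma e00_r_e00: "jmul e00 (jmul r e00) = sc (lk r (0,0)) (e00::'k::field jac)"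
proof -
  have "jmul e00 (jmul r e00) = (\<Sum>u\<in>ks r. jmul e00 (jmul (sg u (lk r u)) e00))"
    by (subst pm_expand[of r]) (simp add: jmul_sum_right jmul_sum_left)
  also have "\<dots> = (\<Sum>u\<in>ks r. if u = (0,0) then sc (lk r u) e00 else 0)"
  proof (rule sum.cong[OF refl])
    fix u :: "nat \<times> nat"
    show "jmul e00 (jmul (sg u (lk r u)) e00) = (if u = (0,0) then sc (lk r u) e00 else 0)"
    proof (cases "u = (0,0)")
      case True
      then show ?thesis by (simp add: jmul_assoc[symmetric] jmul_single00_right sc_jmul_left e00_e00)
    next
      case False
      then have "fst u \<ge> 1 \<or> snd u \<ge> 1" by (cases u) auto
      then show ?thesis
      proof
        assume "fst u \<ge> 1"
        then show ?thesis using False by (simp add: jmul_assoc[symmetric] e00_single_pos)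
      next
        assume "snd u \<ge> 1"
        then show ?thesis using False by (simp add: single_e00_pos)
      qed
    qed
  qed
  also have "\<dots> = sc (lk r (0,0)) e00"
    by (cases "(0::nat,0::nat) \<in> ks r") (auto simp: sum.delta in_keys_iff)
  finally show ?thesis .
qed

lemma lookup_e00_row0: "lk (jmul e00 b) (0,j) = lk (b::'k::field jac) (0,j)"
proof -
  have "lk (jmul (sg (1,1) 1) b) (0,j) = 0"
  proof -
    have "(0,j) \<notin> ks (jmul (sg (1,1) (1::'k)) b)"
      using keys_jmul_single_left[of "(1,1)" "1::'k" b] by (auto simp: jmono_def)
    then show ?thesis by (simp add: in_keys_iff)
  qed
  moreover have "jmul (sg (0,0) 1) b = b" using jmul_one_left[of b] unfolding jone_def .
  ultimately show ?thesis by (simp add: e00_def jmul_diff_left lookup_minus)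
qed

lemma lookup_jpoly: "lk (jpoly f) (i,j) = (if i = 0 then coeff f j else 0)"
proof -
  have "lk (jpoly f) (i,j) = (\<Sum>k\<le>degree f. if k = j \<and> i = 0 then coeff f k else 0)"
    unfolding jpoly_def lookup_sum lookup_single by (rule sum.cong) (auto simp: when_def)
  also have "\<dots> = (if i = 0 then coeff f j else 0)"
    by (cases "j \<le> degree f") (auto simp: coeff_eq_0 sum.delta')
  finally show ?thesis .
qed

lemma lookup_jpoly': "lk (jpoly f) u = (if fst u = 0 then coeff f (snd u) else 0)"
  by (cases u) (simp add: lookup_jpoly)

lemma jpoly_add: "jpoly (f + h) = jpoly f + jpoly h"
  by (rule poly_mapping_eqI) (simp add: lookup_jpoly' lookup_add)
lemma jpoly_diff: "jpoly (f - h) = jpoly f - jpoly h"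
  by (rule poly_mapping_eqI) (simp add: lookup_jpoly' lookup_minus)
lemma jpoly_zero[simp]: "jpoly 0 = 0"
  by (rule poly_mapping_eqI) (simp add: lookup_jpoly')
lemma jpoly_smult: "jpoly (smult c f) = sc c (jpoly f)"
  by (rule poly_mapping_eqI) (simp add: lookup_jpoly')
lemma jpoly_monom: "jpoly (monom c n) = sg (0,n) c"
  by (rule poly_mapping_eqI) (auto simp: lookup_jpoly' lookup_single when_def coeff_monom)
lemma jpoly_sum: "jpoly (\<Sum>i\<in>I. f i) = (\<Sum>i\<in>I. jpoly (f i))"
  by (induction I rule: infinite_finite_induct) (auto simp: jpoly_add)

lemma jpoly_mult: "jpoly (f * h) = jmul (jpoly f) (jpoly (h::'k::field poly))"
proof -
  let ?F = "\<lambda>i. monom (coeff f i) i" and ?H = "\<lambda>j. monom (coeff h j) j"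
  have "f * h = (\<Sum>i\<le>degree f. ?F i) * (\<Sum>j\<le>degree h. ?H j)" by (simp add: poly_as_sum_of_monoms)
  also have "\<dots> = (\<Sum>i\<le>degree f. \<Sum>j\<le>degree h. monom (coeff f i * coeff h j) (i + j))"
    by (simp add: sum_product mult_monom)
  finally have "jpoly (f*h) = (\<Sum>i\<le>degree f. \<Sum>j\<le>degree h. sg (0, i+j) (coeff f i * coeff h j))"
    by (simp add: jpoly_sum jpoly_monom)
  also have "\<dots> = jmul (\<Sum>i\<le>degree f. jpoly (?F i)) (\<Sum>j\<le>degree h. jpoly (?H j))"
    by (simp add: jpoly_monom jmul_sum_left jmul_sum_right jmul_single_single jmono_def add.commute sum.swap[where A="{..degree h}"])
  also have "\<dots> = jmul (jpoly f) (jpoly h)"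
    by (simp only: jpoly_sum[symmetric] poly_as_sum_of_monoms)
  finally show ?thesis .
qed

definition jrho :: "'k::field poly \<Rightarrow> 'k jac" where "jrho f = jmul e00 (jpoly f)"

lemma lookup_jrho: "lk (jrho f) (0,j) = coeff f j"
  by (simp add: jrho_def lookup_e00_row0 lookup_jpoly)
lemma jrho_inj: "jrho f = 0 \<Longrightarrow> f = 0"
  by (rule poly_eqI) (metis lookup_jrho lookup_zero coeff_0)
lemma jrho_add: "jrho (f + h) = jrho f + jrho h" by (simp add: jrho_def jpoly_add jmul_add_right)
lemma jrho_diff: "jrho (f - h) = jrho f - jrho h" by (simp add: jrho_def jpoly_diff jmul_diff_right)
lemma jrho_zero[simp]: "jrho 0 = 0" by (simp add: jrho_def)
lemma jrho_smult: "jrho (smult c f) = sc c (jrho f)" by (simp add: jrho_def jpoly_smult sc_jmul_right)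
lemma jrho_mult: "jrho (f * h) = jmul (jrho f) (jpoly h)" by (simp add: jrho_def jpoly_mult jmul_assoc)
lemma jrho_JJ: "jrho f \<in> JJ" by (simp add: jrho_def JJ_jmul_right e00_JJ)

lemma rowpoly: "\<exists>f. \<forall>j. coeff f j = lk (b::'k::field jac) (0,j)"
proof -
  obtain N where N: "\<forall>n\<in>snd ` ks b. n \<le> N" using finite_nat_set_iff_bounded_le[of "snd ` ks b"] by auto
  let ?f = "Poly (map (\<lambda>j. lk b (0,j)) [0..<Suc N])"
  have "coeff ?f j = lk b (0,j)" for j
  proof (cases "j < Suc N")
    case True then show ?thesis by (simp add: nth_default_def del: upt_Suc)
  next
    case False
    have "(0,j) \<notin> ks b"
    proof
      assume "(0,j) \<in> ks b"
      then have "j \<le> N" using N by (metis image_eqI snd_conv)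
      with False show False by simp
    qed
    with False show ?thesis by (simp add: nth_default_def in_keys_iff)
  qed
  then show ?thesis by blast
qed

lemma e00_rowpoly: "\<exists>f. jmul e00 b = jrho (f::'k::field poly)"
proof -
  obtain f where f: "\<forall>j. coeff f j = lk b (0,j)" using rowpoly by blast
  have "jmul e00 (b - jpoly f) = 0"
    by (rule e00_row0_zero) (simp add: lookup_minus lookup_jpoly f)
  then show ?thesis by (auto simp: jrho_def jmul_diff_right)
qed

lemma conv_jpoly: assumes "\<forall>u\<in>ks b. fst u = 0" shows "\<exists>f. b = jpoly (f::'k::field poly)"
proof -
  obtain f where f: "\<forall>j. coeff f j = lk b (0,j)" using rowpoly by blast
  have "b = jpoly f"
  proof (rule poly_mapping_eqI)
    fix u :: "nat \<times> nat"
    have "fst u \<noteq> 0 \<Longrightarrow> lk b u = 0" using assms by (metis in_keys_iff)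
    then show "lk b u = lk (jpoly f) u"
      by (cases u) (auto simp: lookup_jpoly f)
  qed
  then show ?thesis by blast
qed

lemma jpoly_JJ: "jpoly f \<in> JJ \<Longrightarrow> f = 0"
proof -
  assume a: "jpoly f \<in> JJ"
  have "dsum (int j) (jpoly f) = coeff f j" for j
  proof -
    have "dsum (int j) (jpoly f) = (\<Sum>i\<le>degree f. if int i = int j then coeff f i else 0)"
      unfolding jpoly_def dsum_sum dsum_single by (simp add: dg_def)
    also have "\<dots> = coeff f j" by (cases "j \<le> degree f") (auto simp: coeff_eq_0 sum.delta')
    finally show ?thesis .
  qed
  with a show ?thesis by (auto simp: JJ_def intro: poly_eqI)
qed

lemma mm_e00_mm: "jmul (jmul (mm i 0) e00) (mm 0 i) = (mm i i - mm (Suc i) (Suc i) :: 'k::field jac)"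
  by (simp add: e00_mm jmul_diff_left jmul_diff_right mm_mm)

definition tt :: "nat \<Rightarrow> 'k::field jac \<Rightarrow> 'k jac" where
  "tt i b = jmul (mm i 0) (jmul e00 (jmul (mm 0 i) b))"

lemma telescope: "b = (\<Sum>i<k. tt i b) + jmul (mm k k) (b::'k::field jac)"
proof -
  have "(\<Sum>i<k. tt i b) = jmul (\<Sum>i<k. mm i i - mm (Suc i) (Suc i)) b"
    by (simp add: tt_def jmul_sum_left jmul_assoc[symmetric] mm_e00_mm)
  also have "\<dots> = jmul (mm 0 0 - mm k k) b" using sum_lessThan_telescope'[of "\<lambda>i. mm i i :: 'k jac" k] by simp
  finally show ?thesis by (simp add: jmul_diff_left mm00)
qed

lemma mmkk_JJ: assumes "z \<in> JJ" "\<forall>u\<in>ks z. fst u \<le> k" shows "jmul (mm k k) z = (0::'k::field jac)"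
proof (rule poly_mapping_eqI)
  fix w :: "nat \<times> nat"
  obtain wi wj where w: "w = (wi, wj)" by (cases w)
  have jm: "v \<in> ks z \<Longrightarrow> jmono (k,k) v = (k, snd v + (k - fst v))" for v
    using assms(2) by (cases v) (auto simp: jmono_def)
  have "lk (jmul (mm k k) z) w = (\<Sum>v\<in>ks z. if jmono (k,k) v = w then lk z v else 0)"
    by (simp add: mm_def lookup_jmul_single_left)
  also have "\<dots> = (\<Sum>v\<in>ks z. if wi = k \<and> dg v = int wj - int k then lk z v else 0)"
    by (rule sum.cong[OF refl]) (use jm assms(2) in \<open>auto simp: w dg_def\<close>)
  also have "\<dots> = 0"
  proof (cases "wi = k")
    case True
    then show ?thesis using assms(1) by (simp add: JJ_def dsum_def)
  qed simp
  finally show "lk (jmul (mm k k) z) w = lk 0 w" by simp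
qed

lemma rowbound: "\<exists>k. \<forall>u\<in>ks (z::'k::field jac). fst u \<le> k"
  using finite_nat_set_iff_bounded_le[of "fst ` ks z"] by auto

lemma decomp_JJ: assumes "z \<in> JJ" shows "\<exists>k. z = (\<Sum>i<k. tt i (z::'k::field jac))"
proof -
  obtain k where "\<forall>u\<in>ks z. fst u \<le> k" using rowbound by blast
  then have "jmul (mm k k) z = 0" using mmkk_JJ assms by blast
  then show ?thesis using telescope[of z k] by auto
qed



lemma li_zero: "left_ideal L \<Longrightarrow> 0 \<in> L" by (simp add: left_ideal_def)
lemma li_add: "left_ideal L \<Longrightarrow> a \<in> L \<Longrightarrow> b \<in> L \<Longrightarrow> a + b \<in> L" by (simp add: left_ideal_def)
lemma li_mul: "left_ideal L \<Longrightarrow> a \<in> L \<Longrightarrow> jmul r a \<in> L" by (simp add: left_ideal_def)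
lemma li_sc: "left_ideal L \<Longrightarrow> a \<in> L \<Longrightarrow> sc c a \<in> L" by (simp add: sc_def li_mul)
lemma sc_m1: "sc (-1) a = - a" by (rule poly_mapping_eqI) simp
lemma li_uminus: "left_ideal L \<Longrightarrow> a \<in> L \<Longrightarrow> - a \<in> L" using li_sc[of L a "-1"] by (simp add: sc_m1)
lemma li_diff: "left_ideal L \<Longrightarrow> a \<in> L \<Longrightarrow> b \<in> L \<Longrightarrow> a - b \<in> L"
  using li_add[of L a "-b"] li_uminus by fastforce
lemma li_sum: "left_ideal L \<Longrightarrow> (\<And>i. i \<in> I \<Longrightarrow> f i \<in> L) \<Longrightarrow> (\<Sum>i\<in>I. f i) \<in> L"
  by (induction I rule: infinite_finite_induct) (auto simp: li_zero li_add)

lemma lprinc_li: "left_ideal (lprinc a)"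
  unfolding left_ideal_def lprinc_def
proof (intro conjI ballI allI)
  show "0 \<in> {jmul r a |r. True}" by (rule CollectI, rule exI[of _ 0]) simp
next
  fix x y assume "x \<in> {jmul r a |r. True}" "y \<in> {jmul r a |r. True}"
  then obtain r s where "x = jmul r a" "y = jmul s a" by auto
  then show "x + y \<in> {jmul r a |r. True}" by (auto simp: jmul_add_left[symmetric])
next
  fix t x assume "x \<in> {jmul r a |r. True}"
  then obtain r where "x = jmul r a" by auto
  then show "jmul t x \<in> {jmul r a |r. True}" by (auto simp: jmul_assoc[symmetric])
qed
lemma lprinc_self: "a \<in> lprinc a" unfolding lprinc_def by (rule CollectI, rule exI[of _ jone]) simp
lemma lprinc_sub: "left_ideal L \<Longrightarrow> a \<in> L \<Longrightarrow> lprinc a \<subseteq> L" unfolding lprinc_def by (auto simp: li_mul)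
lemma lprinc_zero: "0 \<in> lprinc a" using lprinc_li li_zero by blast

lemma lspan_li: "left_ideal (lspan G)"
  unfolding left_ideal_def
proof (intro conjI ballI allI)
  show "0 \<in> lspan G" unfolding lspan_def by (rule CollectI, rule exI[of _ "{}"]) simp
next
  fix x y assume "x \<in> lspan G" "y \<in> lspan G"
  then obtain F1 c1 F2 c2 where x: "x = (\<Sum>g\<in>F1. jmul (c1 g) g)" "finite F1" "F1 \<subseteq> G"
     and y: "y = (\<Sum>g\<in>F2. jmul (c2 g) g)" "finite F2" "F2 \<subseteq> G" unfolding lspan_def by blast
  let ?F = "F1 \<union> F2"
  let ?c = "\<lambda>g. (if g \<in> F1 then c1 g else 0) + (if g \<in> F2 then c2 g else 0)"
  have "(\<Sum>g\<in>?F. jmul (?c g) g) = (\<Sum>g\<in>?F. if g \<in> F1 then jmul (c1 g) g else 0) + (\<Sum>g\<in>?F. if g \<in> F2 then jmul (c2 g) g else 0)"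
    unfolding sum.distrib[symmetric] by (rule sum.cong[OF refl]) (simp add: jmul_add_left)
  also have "\<dots> = x + y"
  proof -
    have s1: "(F1 \<union> F2) \<inter> F1 = F1" "(F1 \<union> F2) \<inter> F2 = F2" by blast+
    have "finite ?F" using x y by simp
    then show ?thesis using x y by (simp only: sum.inter_restrict[symmetric] s1)
  qed
  finally have e: "x + y = (\<Sum>g\<in>?F. jmul (?c g) g)" by simp
  show "x + y \<in> lspan G" unfolding lspan_def
    by (rule CollectI, rule exI[of _ ?F], rule exI[of _ ?c]) (use e x y in auto)
next
  fix r x assume "x \<in> lspan G"
  then obtain F c where x: "x = (\<Sum>g\<in>F. jmul (c g) g)" "finite F" "F \<subseteq> G" unfolding lspan_def by blast
  then have "jmul r x = (\<Sum>g\<in>F. jmul (jmul r (c g)) g)" by (simp add: jmul_sum_right jmul_assoc)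
  then show "jmul r x \<in> lspan G" unfolding lspan_def
    by (intro CollectI exI[of _ F] exI[of _ "\<lambda>g. jmul r (c g)"]) (use x in auto)
qed

lemma lspan_sub: "G \<subseteq> lspan G"
proof
  fix g assume "g \<in> G"
  have "g = (\<Sum>h\<in>{g}. jmul jone h)" by simp
  then show "g \<in> lspan G" unfolding lspan_def
    by (intro CollectI exI[of _ "{g}"] exI[of _ "\<lambda>_. jone"]) (use \<open>g \<in> G\<close> in auto)
qed

lemma lspan_least: assumes "left_ideal T" "G \<subseteq> T" shows "lspan G \<subseteq> T"
proof
  fix x assume "x \<in> lspan G"
  then obtain F c where x: "x = (\<Sum>g\<in>F. jmul (c g) g)" "F \<subseteq> G" unfolding lspan_def by blast
  show "x \<in> T" unfolding x(1) by (rule li_sum[OF assms(1)], rule li_mul[OF assms(1)]) (use x(2) assms(2) in blast)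
qed

lemma lspan_mono: "G \<subseteq> G' \<Longrightarrow> lspan G \<subseteq> lspan G'"
  using lspan_least[OF lspan_li, of G G'] lspan_sub[of G'] by blast

lemma fin_genI: assumes "left_ideal T" "finite G" "G \<subseteq> T" "T \<subseteq> lspan G" shows "fin_gen T"
proof -
  have "lspan G \<subseteq> T" using lspan_least assms(1,3) .
  then have "T = lspan G" using assms(4) by (rule antisym[rotated])
  then show ?thesis unfolding fin_gen_def using assms(2,3) by blast
qed

definition subsp :: "'k::field poly set \<Rightarrow> bool" where
  "subsp W \<longleftrightarrow> 0 \<in> W \<and> (\<forall>a\<in>W. \<forall>b\<in>W. a + b \<in> W) \<and> (\<forall>c. \<forall>a\<in>W. smult c a \<in> W)"

lemma subsp_diff: "subsp W \<Longrightarrow> a \<in> W \<Longrightarrow> b \<in> W \<Longrightarrow> a - b \<in> W"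
  unfolding subsp_def by (metis diff_conv_add_uminus smult_minus_left smult_1_left)

definition piv :: "'k::field poly \<Rightarrow> 'k poly set \<Rightarrow> nat set" where
  "piv g W = {degree (f mod g) | f. f \<in> W \<and> f mod g \<noteq> 0}"

lemma piv_bound: "g \<noteq> 0 \<Longrightarrow> piv g W \<subseteq> {..<degree g}"
  unfolding piv_def using degree_mod_less' by fastforce
lemma piv_finite: "g \<noteq> 0 \<Longrightarrow> finite (piv g W)"
  using piv_bound finite_subset by blast
lemma piv_card: assumes "g \<noteq> 0" shows "card (piv g W) \<le> degree g"
  using card_mono[OF finite_lessThan piv_bound[OF assms]] by simp
lemma piv_mono: "W \<subseteq> W' \<Longrightarrow> piv g W \<subseteq> piv g W'"
  unfolding piv_def by blast

lemma pivot_aux: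
  assumes W: "subsp W" and W': "subsp W'" and sub: "W \<subseteq> W'" and P: "piv g W' \<subseteq> piv g W"
  shows "f \<in> W' \<Longrightarrow> f mod g \<noteq> 0 \<Longrightarrow> degree (f mod g) = n \<Longrightarrow> \<exists>w\<in>W. g dvd (f - w)"
proof (induction n arbitrary: f rule: less_induct)
  case (less n f)
  let ?r = "f mod g"
  have "n \<in> piv g W'" using less.prems unfolding piv_def by blast
  then have "n \<in> piv g W" using P by blast
  then obtain w0 where w0: "w0 \<in> W" "w0 mod g \<noteq> 0" "degree (w0 mod g) = n" unfolding piv_def by blast
  let ?s = "w0 mod g"
  define c where "c = lead_coeff ?r / lead_coeff ?s"
  define f1 where "f1 = f - smult c w0"
  have f1W: "f1 \<in> W'" unfolding f1_def
    using subsp_diff[OF W' less.prems(1)] sub w0(1) W unfolding subsp_def by blast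
  have f1mod: "f1 mod g = ?r - smult c ?s" unfolding f1_def by (simp add: poly_mod_diff_left mod_smult_left)
  have lc: "lead_coeff ?s \<noteq> 0" using w0(2) by simp
  have cn: "coeff (f1 mod g) n = 0"
    using less.prems(3) w0(3) lc by (simp add: f1mod c_def)
  have dle: "degree (f1 mod g) \<le> n"
    unfolding f1mod using less.prems(3) w0(3) by (intro degree_diff_le) (auto simp: degree_smult_le order_trans[OF degree_smult_le])
  show ?case
  proof (cases "f1 mod g = 0")
    case True
    then have "g dvd f1" by (simp add: mod_eq_0_iff_dvd)
    moreover have "smult c w0 \<in> W" using W w0(1) unfolding subsp_def by blast
    ultimately show ?thesis unfolding f1_def by blast
  next
    case False
    then have "degree (f1 mod g) \<noteq> n" using cn by (metis leading_coeff_0_iff)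
    then have "degree (f1 mod g) < n" using dle by simp
    then obtain w1 where w1: "w1 \<in> W" "g dvd (f1 - w1)" using less.IH[OF _ f1W False refl] by blast
    have "smult c w0 + w1 \<in> W" using W w0(1) w1(1) unfolding subsp_def by blast
    moreover have "f - (smult c w0 + w1) = f1 - w1" unfolding f1_def by simp
    ultimately show ?thesis using w1(2) by metis
  qed
qed

lemma pivot:
  assumes "subsp W" "subsp W'" "W \<subseteq> W'" "piv g W' \<subseteq> piv g W" "f \<in> W'"
  shows "\<exists>w\<in>W. g dvd (f - w)"
proof (cases "f mod g = 0")
  case True
  then show ?thesis using assms(1) unfolding subsp_def by (intro bexI[of _ 0]) (auto simp: mod_eq_0_iff_dvd)
next
  case False
  show ?thesis using pivot_aux[OF assms(1-4) assms(5) False refl] .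
qed

lemma piv_strict:
  assumes W: "subsp W" and W': "subsp W'" and sub: "W \<subseteq> W'" and ne: "W \<noteq> W'" and g: "g \<noteq> 0"
    and gW: "\<forall>h\<in>W'. g dvd h \<longrightarrow> h \<in> W"
  shows "card (piv g W) < card (piv g W')"
proof (rule ccontr)
  assume "\<not> ?thesis"
  then have "card (piv g W') \<le> card (piv g W)" by simp
  then have eq: "piv g W = piv g W'" using card_subset_eq[OF piv_finite[OF g] piv_mono[OF sub]] piv_mono[OF sub]
    by (metis card_seteq piv_finite[OF g])
  have "W' \<subseteq> W"
  proof
    fix f assume "f \<in> W'"
    then obtain w where w: "w \<in> W" "g dvd (f - w)" using pivot[OF W W' sub _ \<open>f \<in> W'\<close>] eq by blast
    have "f - w \<in> W'" using subsp_diff[OF W' \<open>f \<in> W'\<close>] w(1) sub by blast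
    then have "f - w \<in> W" using gW w(2) by blast
    then have "(f - w) + w \<in> W" using W w(1) unfolding subsp_def by blast
    then show "f \<in> W" by simp
  qed
  then show False using sub ne by blast
qed



lemma sc_diff: "sc c (a - b) = sc c a - sc c b" by (rule poly_mapping_eqI) (simp add: lookup_minus right_diff_distrib)
lemma JJ_sc: "a \<in> JJ \<Longrightarrow> sc c a \<in> JJ" by (simp add: JJ_def dsum_sc)

definition UU :: "'k::field jac set \<Rightarrow> 'k poly set" where "UU A = {f. jrho f \<in> A}"
definition VV :: "'k::field jac set \<Rightarrow> 'k poly set" where "VV A = {f. \<exists>c\<in>A. jpoly f - c \<in> JJ}"

lemma subsp_UU: "left_ideal A \<Longrightarrow> subsp (UU A)"
  unfolding subsp_def UU_def by (auto simp: jrho_add jrho_smult li_zero li_add li_sc)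

lemma subsp_VV: assumes A: "left_ideal A" shows "subsp (VV A)"
  unfolding subsp_def
proof (intro conjI ballI allI)
  show "0 \<in> VV A" unfolding VV_def using li_zero[OF A] JJ_zero by (intro CollectI bexI[of _ 0]) auto
next
  fix f h assume "f \<in> VV A" "h \<in> VV A"
  then obtain c1 c2 where c: "c1 \<in> A" "jpoly f - c1 \<in> JJ" "c2 \<in> A" "jpoly h - c2 \<in> JJ" unfolding VV_def by blast
  have e: "jpoly (f + h) - (c1 + c2) = (jpoly f - c1) + (jpoly h - c2)" by (simp add: jpoly_add)
  have "jpoly (f + h) - (c1 + c2) \<in> JJ" unfolding e using c by (intro JJ_add)
  moreover have "c1 + c2 \<in> A" using c li_add[OF A] by blast
  ultimately have "jpoly (f + h) - (c1 + c2) \<in> JJ \<and> c1 + c2 \<in> A" by blast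
  then show "f + h \<in> VV A" unfolding VV_def by blast
next
  fix c f assume "f \<in> VV A"
  then obtain c1 where "c1 \<in> A" "jpoly f - c1 \<in> JJ" unfolding VV_def by blast
  moreover have "jpoly (smult c f) - sc c c1 = sc c (jpoly f - c1)" by (simp add: jpoly_smult sc_diff)
  ultimately have "jpoly (smult c f) - sc c c1 \<in> JJ" "sc c c1 \<in> A" using JJ_sc li_sc[OF A] by auto
  then show "smult c f \<in> VV A" unfolding VV_def by blast
qed

lemma UU_mono: "A \<subseteq> A' \<Longrightarrow> UU A \<subseteq> UU A'" unfolding UU_def by auto
lemma VV_mono: "A \<subseteq> A' \<Longrightarrow> VV A \<subseteq> VV A'" unfolding VV_def by blast

lemma rows:
  assumes A: "left_ideal A" and A': "left_ideal A'" and U: "UU A' \<subseteq> UU A" and b: "b \<in> A'"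
  shows "tt i b \<in> A"
proof -
  obtain f where f: "jmul e00 (jmul (mm 0 i) b) = jrho f" using e00_rowpoly by blast
  have "jrho f \<in> A'" using f[symmetric] li_mul[OF A'] b by metis
  then have "f \<in> UU A" using U unfolding UU_def by blast
  then have "jrho f \<in> A" unfolding UU_def by blast
  then show ?thesis unfolding tt_def f using li_mul[OF A] by blast
qed

lemma JJ_sub:
  assumes A: "left_ideal A" and A': "left_ideal A'" and U: "UU A' \<subseteq> UU A" and z: "z \<in> A'" "z \<in> JJ"
  shows "z \<in> A"
proof -
  obtain k where k: "z = (\<Sum>i<k. tt i z)" using decomp_JJ[OF z(2)] by blast
  have "(\<Sum>i<k. tt i z) \<in> A" by (rule li_sum[OF A]) (rule rows[OF A A' U z(1)])
  then show ?thesis using k by simp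
qed

definition chain :: "'k::field jac set \<Rightarrow> 'k jac set \<Rightarrow> bool" where
  "chain A B \<longleftrightarrow> (\<exists>(n::nat) (M :: nat \<Rightarrow> 'k jac set). M 0 = A \<and> M n = B \<and> (\<forall>i\<le>n. left_ideal (M i)) \<and>
     (\<forall>i<n. M i \<subset> M (Suc i) \<and>
        (\<forall>N :: 'k jac set. left_ideal N \<longrightarrow> M i \<subseteq> N \<longrightarrow> N \<subseteq> M (Suc i) \<longrightarrow> N = M i \<or> N = M (Suc i))))"

lemma finite_length_chain: "finite_length L = chain {0} L"
  unfolding finite_length_def chain_def ..

lemma chain_refl: "left_ideal A \<Longrightarrow> chain A A"
  unfolding chain_def by (rule exI[of _ 0], rule exI[of _ "\<lambda>_. A"]) auto

lemma chain_cons: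
  assumes A: "left_ideal A" and AN: "A \<subset> N"
    and cov: "\<forall>N'. left_ideal N' \<longrightarrow> A \<subseteq> N' \<longrightarrow> N' \<subseteq> N \<longrightarrow> N' = A \<or> N' = N"
    and ch: "chain N B"
  shows "chain A B"
proof -
  obtain n M where M: "M 0 = N" "M n = B" "\<forall>i\<le>n. left_ideal (M i)"
    "\<forall>i<n. M i \<subset> M (Suc i) \<and> (\<forall>N'. left_ideal N' \<longrightarrow> M i \<subseteq> N' \<longrightarrow> N' \<subseteq> M (Suc i) \<longrightarrow> N' = M i \<or> N' = M (Suc i))"
    using ch unfolding chain_def by blast
  define M' where "M' i = (if i = 0 then A else M (i - 1))" for i
  have 1: "M' 0 = A" "M' (Suc n) = B" using M by (auto simp: M'_def)
  have 2: "\<forall>i\<le>Suc n. left_ideal (M' i)" using M(3) A by (auto simp: M'_def)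
  have 3: "\<forall>i<Suc n. M' i \<subset> M' (Suc i) \<and> (\<forall>N'. left_ideal N' \<longrightarrow> M' i \<subseteq> N' \<longrightarrow> N' \<subseteq> M' (Suc i) \<longrightarrow> N' = M' i \<or> N' = M' (Suc i))"
  proof (intro allI impI)
    fix i assume i: "i < Suc n"
    show "M' i \<subset> M' (Suc i) \<and> (\<forall>N'. left_ideal N' \<longrightarrow> M' i \<subseteq> N' \<longrightarrow> N' \<subseteq> M' (Suc i) \<longrightarrow> N' = M' i \<or> N' = M' (Suc i))"
    proof (cases i)
      case 0 then show ?thesis using AN cov M(1) by (simp add: M'_def)
    next
      case (Suc j)
      then have "j < n" using i by simp
      then show ?thesis using M(4) Suc by (simp add: M'_def)
    qed
  qed
  show ?thesis unfolding chain_def using 1 2 3 by blast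
qed

lemma chain_ex:
  fixes \<mu> :: "'k::field jac set \<Rightarrow> nat"
  assumes Qli: "\<And>N. Q N \<Longrightarrow> left_ideal N"
    and Qsub: "\<And>N N'. Q N' \<Longrightarrow> left_ideal N \<Longrightarrow> N \<subseteq> N' \<Longrightarrow> Q N"
    and strict: "\<And>N N'. Q N' \<Longrightarrow> left_ideal N \<Longrightarrow> N \<subset> N' \<Longrightarrow> \<mu> N < \<mu> N'"
  shows "Q B \<Longrightarrow> left_ideal A \<Longrightarrow> A \<subseteq> B \<Longrightarrow> chain A B"
proof (induction "\<mu> B - \<mu> A" arbitrary: A rule: less_induct)
  case (less A)
  show ?case
  proof (cases "A = B")
    case True then show ?thesis using chain_refl less.prems by simp
  next
    case False
    then have AB: "A \<subset> B" using less.prems by blast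
    define C where "C N \<longleftrightarrow> left_ideal N \<and> A \<subset> N \<and> N \<subseteq> B" for N
    have "C B" unfolding C_def using AB Qli less.prems by blast
    then obtain N where N: "C N" and Nmin: "\<forall>N'. C N' \<longrightarrow> \<mu> N \<le> \<mu> N'"
      using ex_has_least_nat[of C B \<mu>] by blast
    have QN: "Q N" using Qsub[OF less.prems(1)] N unfolding C_def by blast
    have cov: "\<forall>N'. left_ideal N' \<longrightarrow> A \<subseteq> N' \<longrightarrow> N' \<subseteq> N \<longrightarrow> N' = A \<or> N' = N"
    proof (intro allI impI)
      fix N' assume h: "left_ideal N'" "A \<subseteq> N'" "N' \<subseteq> N"
      show "N' = A \<or> N' = N"
      proof (rule ccontr)
        assume "\<not> (N' = A \<or> N' = N)"
        then have "A \<subset> N'" "N' \<subset> N" using h by auto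
        then have "C N'" using h N unfolding C_def by blast
        then have "\<mu> N \<le> \<mu> N'" using Nmin by blast
        moreover have "\<mu> N' < \<mu> N" using strict[OF QN h(1) \<open>N' \<subset> N\<close>] .
        ultimately show False by simp
      qed
    qed
    have "\<mu> A < \<mu> N" using strict[OF QN less.prems(2)] N unfolding C_def by blast
    moreover have "\<mu> N \<le> \<mu> B"
    proof (cases "N = B")
      case False
      then have "N \<subset> B" using N unfolding C_def by blast
      then show ?thesis using strict[OF less.prems(1)] N unfolding C_def by fastforce
    qed simp
    ultimately have "\<mu> B - \<mu> N < \<mu> B - \<mu> A" by simp
    then have "chain N B" using less.hyps[of N] less.prems(1) N unfolding C_def by blast
    then show ?thesis using chain_cons[OF less.prems(2) _ cov] N unfolding C_def by blast
  qed
qed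

lemma gen_ex_aux:
  fixes \<mu> :: "'k::field jac set \<Rightarrow> nat"
  assumes bound: "\<And>G. finite G \<Longrightarrow> G0 \<subseteq> G \<Longrightarrow> G \<subseteq> T \<Longrightarrow> \<mu> (lspan G) \<le> B"
    and strict: "\<And>G b. finite G \<Longrightarrow> G0 \<subseteq> G \<Longrightarrow> G \<subseteq> T \<Longrightarrow> b \<in> T \<Longrightarrow> b \<notin> lspan G \<Longrightarrow> \<mu> (lspan G) < \<mu> (lspan (insert b G))"
  shows "finite G \<Longrightarrow> G0 \<subseteq> G \<Longrightarrow> G \<subseteq> T \<Longrightarrow> \<exists>G'. finite G' \<and> G' \<subseteq> T \<and> T \<subseteq> lspan G'"
proof (induction "B - \<mu> (lspan G)" arbitrary: G rule: less_induct)
  case (less G)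
  show ?case
  proof (cases "T \<subseteq> lspan G")
    case True then show ?thesis using less.prems by blast
  next
    case False
    then obtain b where b: "b \<in> T" "b \<notin> lspan G" by blast
    have lt: "\<mu> (lspan G) < \<mu> (lspan (insert b G))" using strict[OF less.prems b] .
    have "\<mu> (lspan (insert b G)) \<le> B" using bound[of "insert b G"] less.prems b by blast
    then have "B - \<mu> (lspan (insert b G)) < B - \<mu> (lspan G)" using lt by simp
    then show ?thesis using less.hyps[of "insert b G"] less.prems b by blast
  qed
qed

lemma gen_ex:
  fixes \<mu> :: "'k::field jac set \<Rightarrow> nat"
  assumes G0: "finite G0" "G0 \<subseteq> T"
    and bound: "\<And>G. finite G \<Longrightarrow> G0 \<subseteq> G \<Longrightarrow> G \<subseteq> T \<Longrightarrow> \<mu> (lspan G) \<le> B"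
    and strict: "\<And>G b. finite G \<Longrightarrow> G0 \<subseteq> G \<Longrightarrow> G \<subseteq> T \<Longrightarrow> b \<in> T \<Longrightarrow> b \<notin> lspan G \<Longrightarrow> \<mu> (lspan G) < \<mu> (lspan (insert b G))"
  shows "\<exists>G. finite G \<and> G \<subseteq> T \<and> T \<subseteq> lspan G"
  using gen_ex_aux[of G0 T \<mu> B G0, OF bound strict] G0 by blast

lemma li_0: "left_ideal {0}" unfolding left_ideal_def by simp



lemma part1:
  fixes S H :: "'k::field jac set" and p :: "'k poly"
  assumes H: "left_ideal H" and S: "left_ideal S" and SI: "S \<subseteq> jI"
    and Hdef: "H = {s + t | s t. s \<in> S \<and> t \<in> lprinc (jpoly p)}"
    and disj: "S \<inter> lprinc (jpoly p) = {0}" and p: "p \<noteq> 0"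
  shows "fin_gen H \<and> finite_length S"
proof -
  have SJ: "S \<subseteq> JJ" using SI jI_sub_JJ by blast
  define \<mu> where "\<mu> N = card (piv p (UU N))" for N :: "'k jac set"
  have bound: "\<mu> N \<le> degree p" for N unfolding \<mu>_def using piv_card[OF p] .
  have strict: "\<mu> N < \<mu> N'" if N': "left_ideal N'" "N' \<subseteq> S" and N: "left_ideal N" "N \<subset> N'" for N N'
  proof -
    have ne: "UU N \<noteq> UU N'"
    proof
      assume "UU N = UU N'"
      then have "N' \<subseteq> N" using JJ_sub[OF N(1) N'(1)] N'(2) SJ by blast
      then show False using N(2) by blast
    qed
    have gW: "\<forall>h\<in>UU N'. p dvd h \<longrightarrow> h \<in> UU N"
    proof (intro ballI impI)
      fix h assume h: "h \<in> UU N'" "p dvd h"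
      then obtain q where q: "h = p * q" by (elim dvdE)
      have "jrho h = jmul (jrho q) (jpoly p)" unfolding q by (subst mult.commute) (rule jrho_mult)
      then have "jrho h \<in> lprinc (jpoly p)" unfolding lprinc_def by blast
      moreover have "jrho h \<in> S" using h(1) N'(2) unfolding UU_def by blast
      ultimately have "jrho h = 0" using disj by blast
      then show "h \<in> UU N" unfolding UU_def using li_zero[OF N(1)] by simp
    qed
    show ?thesis unfolding \<mu>_def
      by (rule piv_strict[OF subsp_UU[OF N(1)] subsp_UU[OF N'(1)] UU_mono ne p gW]) (use N(2) in blast)
  qed
  have "chain {0} S"
    by (rule chain_ex[where Q="\<lambda>N. left_ideal N \<and> N \<subseteq> S" and \<mu>=\<mu>])
       (use strict S li_0 li_zero[OF S] in auto)
  then have FL: "finite_length S" by (simp add: finite_length_chain)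
  obtain G where G: "finite G" "G \<subseteq> S" "S \<subseteq> lspan G"
  proof -
    have "\<exists>G. finite G \<and> G \<subseteq> S \<and> S \<subseteq> lspan G"
    proof (rule gen_ex[of "{}" S \<mu> "degree p"])
      fix G b assume Gb: "finite G" "{} \<subseteq> G" "G \<subseteq> S" "b \<in> S" "b \<notin> lspan G"
      have sub: "lspan G \<subseteq> lspan (insert b G)" by (rule lspan_mono) blast
      have "b \<in> lspan (insert b G)" using lspan_sub by blast
      then have "lspan G \<subset> lspan (insert b G)" using sub Gb(5) by blast
      moreover have "lspan (insert b G) \<subseteq> S" using lspan_least[OF S] Gb by blast
      ultimately show "\<mu> (lspan G) < \<mu> (lspan (insert b G))"
        using strict[OF lspan_li] lspan_li by blast
    qed (use bound in auto)
    then show ?thesis using that by blast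
  qed
  let ?G = "insert (jpoly p) G"
  have GH: "?G \<subseteq> H"
  proof
    fix x assume "x \<in> ?G"
    then show "x \<in> H"
    proof
      assume "x = jpoly p"
      then have "x = 0 + jmul jone (jpoly p)" by simp
      then show ?thesis unfolding Hdef lprinc_def using li_zero[OF S] by blast
    next
      assume "x \<in> G"
      then have "x = x + jmul 0 (jpoly p)" "x \<in> S" using G by auto
      then show ?thesis unfolding Hdef lprinc_def by blast
    qed
  qed
  have HG: "H \<subseteq> lspan ?G"
  proof
    fix x assume "x \<in> H"
    then obtain s r where x: "x = s + jmul r (jpoly p)" "s \<in> S" unfolding Hdef lprinc_def by blast
    have "s \<in> lspan ?G" using x(2) G(3) lspan_mono[of G ?G] by blast
    moreover have "jmul r (jpoly p) \<in> lspan ?G" using lspan_sub[of ?G] li_mul[OF lspan_li] by blast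
    ultimately show "x \<in> lspan ?G" using x(1) li_add[OF lspan_li] by blast
  qed
  have "fin_gen H" by (rule fin_genI[OF H _ GH HG]) (use G in simp)
  with FL show ?thesis by blast
qed



lemma simple_e00:
  assumes u: "u = jmul e00 y" "u \<noteq> (0::'k::field jac)"
  shows "simple_li (lprinc u)"
  unfolding simple_li_def
proof (intro conjI allI impI)
  show "left_ideal (lprinc u)" by (rule lprinc_li)
  show "lprinc u \<noteq> {0}" using lprinc_self[of u] u(2) by blast
  fix N assume N: "left_ideal N" "N \<subseteq> lprinc u"
  show "N = {0} \<or> N = lprinc u"
  proof (cases "N = {0}")
    case False
    then obtain n where n: "n \<in> N" "n \<noteq> 0" using li_zero[OF N(1)] by blast
    then obtain r where r: "n = jmul r u" using N(2) unfolding lprinc_def by blast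
    have uJ: "u \<in> JJ" unfolding u(1) by (rule JJ_jmul_right[OF e00_JJ])
    have nJ: "n \<in> JJ" unfolding r by (rule JJ_jmul_left[OF uJ])
    obtain k where k: "n = (\<Sum>i<k. tt i n)" using decomp_JJ[OF nJ] by blast
    have "\<exists>i. tt i n \<noteq> 0"
    proof (rule ccontr)
      assume "\<not> ?thesis"
      then have "(\<Sum>i<k. tt i n) = 0" by simp
      then show False using k n(2) by simp
    qed
    then obtain i where i: "tt i n \<noteq> 0" by blast
    define w where "w = jmul e00 (jmul (mm 0 i) n)"
    have w0: "w \<noteq> 0" using i unfolding tt_def w_def[symmetric] by auto
    have wN: "w \<in> N" unfolding w_def using li_mul[OF N(1)] n(1) by blast
    define c where "c = lk (jmul (mm 0 i) r) (0,0)"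
    have "w = jmul (jmul e00 (jmul (jmul (mm 0 i) r) e00)) y"
      unfolding w_def r u(1) by (simp add: jmul_assoc)
    also have "\<dots> = sc c u" unfolding e00_r_e00 c_def u(1) by (simp add: sc_jmul_left)
    finally have wc: "w = sc c u" .
    have c0: "c \<noteq> 0" using w0 wc by auto
    have "sc (inverse c) w = u" using c0 wc by simp
    then have "u \<in> N" using li_sc[OF N(1) wN] by metis
    then have "lprinc u \<subseteq> N" by (rule lprinc_sub[OF N(1)])
    then show ?thesis using N(2) by blast
  qed simp
qed

lemma simple_tt:
  assumes t: "tt i b \<noteq> (0::'k::field jac)"
  shows "simple_li (lprinc (tt i b))"
proof -
  define u where "u = jmul e00 (jmul (mm 0 i) b)"
  have tu: "tt i b = jmul (mm i 0) u" unfolding tt_def u_def ..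
  have ut: "u = jmul (mm 0 i) (tt i b)" unfolding tu by (simp add: jmul_assoc[symmetric] mm_mm mm00)
  have u0: "u \<noteq> 0" using t tu by auto
  have "lprinc (tt i b) = lprinc u"
  proof
    show "lprinc (tt i b) \<subseteq> lprinc u"
      by (rule lprinc_sub[OF lprinc_li]) (unfold tu lprinc_def, blast)
    show "lprinc u \<subseteq> lprinc (tt i b)"
      by (rule lprinc_sub[OF lprinc_li]) (unfold ut lprinc_def, blast)
  qed
  then show ?thesis using simple_e00[OF u_def u0] by simp
qed

lemma tt_in: "left_ideal L \<Longrightarrow> b \<in> L \<Longrightarrow> tt i b \<in> L"
  unfolding tt_def by (intro li_mul)

lemma semisimple:
  assumes L: "left_ideal L" and LJ: "L \<subseteq> JJ"
  shows "semisimple_li L"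
  unfolding semisimple_li_def
proof (intro conjI ballI)
  show "left_ideal L" by fact
  fix a assume a: "a \<in> L"
  show "\<exists>(n::nat) f S. (\<forall>i<n. simple_li (S i) \<and> S i \<subseteq> L \<and> f i \<in> S i) \<and> a = (\<Sum>i<n. f i)"
  proof (cases "a = 0")
    case True
    have "(\<forall>i<(0::nat). simple_li ((\<lambda>_. {}) i) \<and> (\<lambda>_. {}) i \<subseteq> L \<and> (\<lambda>_. 0) i \<in> (\<lambda>_. {}) i) \<and> a = (\<Sum>i<(0::nat). (\<lambda>_. 0) i)"
      using True by simp
    then show ?thesis by blast
  next
    case False
    obtain k where k: "a = (\<Sum>i<k. tt i a)" using decomp_JJ[OF subsetD[OF LJ a]] by blast
    have "\<exists>i. tt i a \<noteq> 0"
    proof (rule ccontr)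
      assume "\<not> ?thesis"
      then have "(\<Sum>i<k. tt i a) = 0" by simp
      then show False using k False by simp
    qed
    then obtain i0 where i0: "tt i0 a \<noteq> 0" by blast
    define S where "S i = lprinc (if tt i a \<noteq> 0 then tt i a else tt i0 a)" for i
    have P: "\<forall>i<k. simple_li (S i) \<and> S i \<subseteq> L \<and> tt i a \<in> S i"
    proof (intro allI impI conjI)
      fix i
      show "simple_li (S i)"
      proof (cases "tt i a \<noteq> 0")
        case True then show ?thesis unfolding S_def using simple_tt[OF True] by simp
      next
        case False then show ?thesis unfolding S_def using simple_tt[OF i0] by simp
      qed
      show "S i \<subseteq> L" unfolding S_def
        using lprinc_sub[OF L tt_in[OF L a, of i]] lprinc_sub[OF L tt_in[OF L a, of i0]] by simp
      show "tt i a \<in> S i"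
      proof (cases "tt i a \<noteq> 0")
        case True then show ?thesis unfolding S_def using lprinc_self[of "tt i a"] by simp
      next
        case False then show ?thesis unfolding S_def using lprinc_zero[of "tt i0 a"] by simp
      qed
    qed
    show ?thesis by (rule exI[of _ k], rule exI[of _ "\<lambda>i. tt i a"], rule exI[of _ S]) (use P k in simp)
  qed
qed

lemma mm0k_keys: assumes "\<forall>u\<in>ks b. fst u \<le> k" shows "\<forall>u\<in>ks (jmul (mm 0 k) (b::'k::field jac)). fst u = 0"
proof
  fix u assume "u \<in> ks (jmul (mm 0 k) b)"
  then obtain v where "v \<in> ks b" "u = jmono (0,k) v" using keys_jmul_single_left[of "(0,k)" 1 b] unfolding mm_def by blast
  then show "fst u = 0" using assms by (auto simp: jmono_def)
qed

lemma key_iv: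
  assumes A: "left_ideal A" and A': "left_ideal A'" and sub: "A \<subseteq> A'"
    and U: "UU A' \<subseteq> UU A" and V: "VV A' \<subseteq> VV (A::'k::field jac set)"
  shows "A' \<subseteq> A"
proof
  fix b assume b: "b \<in> A'"
  obtain k where k: "\<forall>u\<in>ks b. fst u \<le> k" using rowbound by blast
  obtain f where f: "jmul (mm 0 k) b = jpoly f" using conv_jpoly[OF mm0k_keys[OF k]] by metis
  have "f \<in> VV A'" unfolding VV_def using f[symmetric] li_mul[OF A' b] JJ_zero
    by (intro CollectI bexI[of _ "jmul (mm 0 k) b"]) auto
  then obtain c where c: "c \<in> A" "jpoly f - c \<in> JJ" using V unfolding VV_def by blast
  have s1: "(\<Sum>i<k. tt i b) \<in> A" by (rule li_sum[OF A]) (rule rows[OF A A' U b])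
  have mk: "jmul (mm k k) b = jmul (mm k 0) (jpoly f)"
    unfolding f[symmetric] by (simp add: jmul_assoc[symmetric] mm_mm)
  define z where "z = jmul (mm k 0) (jpoly f - c)"
  have zJ: "z \<in> JJ" unfolding z_def by (rule JJ_jmul_left[OF c(2)])
  have zeq: "z = jmul (mm k k) b - jmul (mm k 0) c" unfolding z_def mk by (simp add: jmul_diff_right)
  have "z \<in> A'" unfolding zeq using li_diff[OF A' li_mul[OF A' b]] li_mul[OF A' ] c(1) sub by blast
  then have zA: "z \<in> A" using JJ_sub[OF A A' U _ zJ] by blast
  have "jmul (mm k k) b = jmul (mm k 0) c + z" using zeq by simp
  then have "jmul (mm k k) b \<in> A" using li_add[OF A li_mul[OF A c(1)] zA] by simp
  then show "b \<in> A" using telescope[of b k] li_add[OF A s1] by metis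
qed

lemma part2:
  assumes L: "left_ideal (L::'k::field jac set)"
  shows "semisimple_li L \<or> fin_gen L"
proof (cases "L \<subseteq> JJ")
  case True then show ?thesis using semisimple[OF L] by blast
next
  case False
  then obtain a where a: "a \<in> L" "a \<notin> JJ" by blast
  obtain k0 where k0: "\<forall>u\<in>ks a. fst u \<le> k0" using rowbound by blast
  obtain g where g: "jmul (mm 0 k0) a = jpoly g" using conv_jpoly[OF mm0k_keys[OF k0]] by metis
  have g0: "g \<noteq> 0"
  proof
    assume "g = 0"
    then have z: "jmul (mm 0 k0) a = 0" using g by simp
    obtain d where d: "dsum d a \<noteq> 0" using a(2) unfolding JJ_def by blast
    have "dsum (d + int k0) (jmul (mm 0 k0) a) = dsum d a"
      by (simp add: mm_def dsum_jmul_single_left dg_def)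
    then show False using z d by simp
  qed
  have gU: "h \<in> UU A" if A: "left_ideal A" "a \<in> A" and h: "g dvd h" for A h
  proof -
    obtain q where q: "h = g * q" using h by (elim dvdE)
    have "jrho h = jmul (jrho q) (jmul (mm 0 k0) a)" unfolding q g by (subst mult.commute) (rule jrho_mult)
    then show ?thesis unfolding UU_def using li_mul[OF A(1) li_mul[OF A]] by simp
  qed
  have gV: "h \<in> VV A" if A: "left_ideal A" "a \<in> A" and h: "g dvd h" for A h
  proof -
    obtain q where q: "h = g * q" using h by (elim dvdE)
    have "jpoly h = jmul (jpoly q) (jmul (mm 0 k0) a)" unfolding q g by (subst mult.commute) (rule jpoly_mult)
    then have "jpoly h \<in> A" using li_mul[OF A(1) li_mul[OF A]] by simp
    then show ?thesis unfolding VV_def using JJ_zero by (intro CollectI bexI[of _ "jpoly h"]) auto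
  qed
  define \<mu> where "\<mu> A = card (piv g (UU A)) + card (piv g (VV A))" for A :: "'k jac set"
  have bound: "\<mu> A \<le> 2 * degree g" for A unfolding \<mu>_def using piv_card[OF g0, of "UU A"] piv_card[OF g0, of "VV A"] by simp
  have strict: "\<mu> A < \<mu> A'" if A: "left_ideal A" "a \<in> A" and A': "left_ideal A'" and AA: "A \<subset> A'" for A A'
  proof -
    have m1: "card (piv g (UU A)) \<le> card (piv g (UU A'))"
      by (rule card_mono[OF piv_finite[OF g0] piv_mono[OF UU_mono]]) (use AA in blast)
    have m2: "card (piv g (VV A)) \<le> card (piv g (VV A'))"
      by (rule card_mono[OF piv_finite[OF g0] piv_mono[OF VV_mono]]) (use AA in blast)
    have "UU A \<noteq> UU A' \<or> VV A \<noteq> VV A'"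
    proof (rule ccontr)
      assume "\<not> ?thesis"
      then have "A' \<subseteq> A" using key_iv[OF A(1) A'] AA by blast
      then show False using AA by blast
    qed
    then show ?thesis
    proof
      assume ne: "UU A \<noteq> UU A'"
      have "card (piv g (UU A)) < card (piv g (UU A'))"
        by (rule piv_strict[OF subsp_UU[OF A(1)] subsp_UU[OF A'] UU_mono ne g0])
           (use AA gU[OF A] in blast)+
      then show ?thesis unfolding \<mu>_def using m2 by simp
    next
      assume ne: "VV A \<noteq> VV A'"
      have "card (piv g (VV A)) < card (piv g (VV A'))"
        by (rule piv_strict[OF subsp_VV[OF A(1)] subsp_VV[OF A'] VV_mono ne g0])
           (use AA gV[OF A] in blast)+
      then show ?thesis unfolding \<mu>_def using m1 by simp
    qed
  qed
  have "\<exists>G. finite G \<and> G \<subseteq> L \<and> L \<subseteq> lspan G"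
  proof (rule gen_ex[of "{a}" L \<mu> "2 * degree g"])
    fix G b assume Gb: "finite G" "{a} \<subseteq> G" "G \<subseteq> L" "b \<in> L" "b \<notin> lspan G"
    have sub: "lspan G \<subseteq> lspan (insert b G)" by (rule lspan_mono) blast
    have "b \<in> lspan (insert b G)" using lspan_sub by blast
    then have "lspan G \<subset> lspan (insert b G)" using sub Gb(5) by blast
    moreover have "a \<in> lspan G" using Gb(2) lspan_sub by blast
    ultimately show "\<mu> (lspan G) < \<mu> (lspan (insert b G))"
      using strict[OF lspan_li _ lspan_li] by blast
  qed (use bound a in auto)
  then obtain G where "finite G" "G \<subseteq> L" "L \<subseteq> lspan G" by blast
  then show ?thesis using fin_genI[OF L] by blast
qed

theorem corollary1:
  shows "(\<forall>(S :: 'k::field jac set) H (p :: 'k poly).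
            left_ideal H \<and> left_ideal S \<and> S \<subseteq> jI \<and>
            H = {s + t | s t. s \<in> S \<and> t \<in> lprinc (jpoly p)} \<and>
            S \<inter> lprinc (jpoly p) = {0} \<and> p \<noteq> 0
            \<longrightarrow> fin_gen H \<and> finite_length S)
       \<and> (\<forall>L :: 'k jac set. left_ideal L \<longrightarrow> semisimple_li L \<or> fin_gen L)"
  using part1 part2 by blast


end
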